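(* For $n \ge 2$, \begin{align*} \mathbf{M}_n &= \begin{pmatrix} \frac{\Gamma \left(\frac{mn + m + n}{m + 1}\right)}{\Gamma(n) \, \Gamma \left(\frac{2m + 1}{m + 1}\right)} & 0 \\ \frac{2 \, \Gamma\left(\frac{mn + m + n}{m + 1}\right)}{\Gamma(n) \, \Gamma \left(\frac{2m + 1}{m + 1}\right)} - \frac{2(mn + n - 1) \, \Gamma \left(\frac{mn + m + n - 1}{m + 1}\right)}{m \, \Gamma(n) \, \Gamma \left(\frac{2m}{m + 1}\right)} & \frac{(mn + n - 1) \, \Gamma \left(\frac{mn + m + n - 1}{m + 1}\right)}{m \, \Gamma(n) \, \Gamma \left(\frac{2m}{m + 1}\right)} \end{pmatrix} \begin{pmatrix} W_n \\ B_n \end{pmatrix} \\ &\qquad + \begin{pmatrix} - \frac{\Gamma \left(\frac{mn + 2m + n + 1}{m + 1}\right)}{\Gamma(n) \, \Gamma \left(\frac{3m + 2}{m + 1}\right)} + 1 \\ \frac{(m + 1)(2mn + m + 2n - 1) \, \Gamma \left(\frac{mn + 2m + n}{m + 1}\right)}{m(3m + 1) \, \Gamma(n) \, \Gamma \left(\frac{2m}{m + 1}\right)} - \frac{2 \, \Gamma \left(\frac{mn + 2m + n + 1}{m + 1}\right)}{\Gamma(n) \, \Gamma \left(\frac{3m + 2}{m + 1}\right)} \end{pmatrix} \end{align*} is a martingale array (with respect to the filtration $\mathbb{F}_{n,0}$).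
   Context: A preferential dynamic attachment circuit of index $m\ge 2$ starts at time $0$ with a single node $0$. At time $n\ge1$ a new node $n$ is added and chooses $m$ parents one at a time, with replacement, from the existing nodes; at each of these $m$ steps an existing node $v$ is chosen with probability proportional to its current outdegree plus one (outdegrees are updated after each of the $m$ choices), and an edge is drawn from the chosen parent to node $n$. In the extended circuit, a node of outdegree $s$ carries $s+1$ external nodes; external nodes of nodes of outdegree $0$ are colored white and those of nodes of outdegree $1$ are colored blue. $W_n$ is the number of white external nodes (= number of nodes of outdegree $0$) and $B_n$ is the number of blue external nodes (= twice the number of nodes of outdegree $1$) after $n$ insertions. $\mathbb{F}_{n-1,0}$ is the $\sigma$-field generated by the growth of the circuit through the first $n-1$ node insertions. One has $\mathbb{E}[(W_n,B_n)^\top \mid \mathbb{F}_{n-1,0}] = \mathbf{A}_n (W_{n-1},B_{n-1})^\top + (1,0)^\top$ with $\mathbf{A}_n=\begin{pmatrix}\frac{(m+1)(n-1)}{mn+n-1} & 0\\ \frac{2m(m+1)(n-1)}{(mn+n-2)(mn+n-1)} & \frac{(m+1)(n-1)(mn-m+n-2)}{(mn+n-2)(mn+n-1)}\end{pmatrix}$. *)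

theory Defs
  imports "HOL-Probability.Probability"
begin

definition M11 :: "nat \<Rightarrow> nat \<Rightarrow> real" where
  "M11 m n = (let r = real m; x = real n in
     Gamma ((r*x + r + x)/(r+1)) / (Gamma x * Gamma ((2*r+1)/(r+1))))"

definition M22 :: "nat \<Rightarrow> nat \<Rightarrow> real" where
  "M22 m n = (let r = real m; x = real n in
     (r*x + x - 1) * Gamma ((r*x + r + x - 1)/(r+1)) / (r * Gamma x * Gamma (2*r/(r+1))))"

definition M21 :: "nat \<Rightarrow> nat \<Rightarrow> real" where
  "M21 m n = (let r = real m; x = real n in
     2 * Gamma ((r*x + r + x)/(r+1)) / (Gamma x * Gamma ((2*r+1)/(r+1)))
     - 2 * (r*x + x - 1) * Gamma ((r*x + r + x - 1)/(r+1)) / (r * Gamma x * Gamma (2*r/(r+1))))"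

definition c1 :: "nat \<Rightarrow> nat \<Rightarrow> real" where
  "c1 m n = (let r = real m; x = real n in
     - Gamma ((r*x + 2*r + x + 1)/(r+1)) / (Gamma x * Gamma ((3*r+2)/(r+1))) + 1)"

definition c2 :: "nat \<Rightarrow> nat \<Rightarrow> real" where
  "c2 m n = (let r = real m; x = real n in
     (r+1) * (2*r*x + r + 2*x - 1) * Gamma ((r*x + 2*r + x)/(r+1))
        / (r * (3*r+1) * Gamma x * Gamma (2*r/(r+1)))
     - 2 * Gamma ((r*x + 2*r + x + 1)/(r+1)) / (Gamma x * Gamma ((3*r+2)/(r+1))))"

definition A11 :: "nat \<Rightarrow> nat \<Rightarrow> real" where
  "A11 m n = (let r = real m; x = real n in (r+1)*(x-1) / (r*x + x - 1))"

definition A21 :: "nat \<Rightarrow> nat \<Rightarrow> real" where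
  "A21 m n = (let r = real m; x = real n in
     2*r*(r+1)*(x-1) / ((r*x + x - 2) * (r*x + x - 1)))"

definition A22 :: "nat \<Rightarrow> nat \<Rightarrow> real" where
  "A22 m n = (let r = real m; x = real n in
     (r+1)*(x-1)*(r*x - r + x - 2) / ((r*x + x - 2) * (r*x + x - 1)))"

definition filtration :: "'a measure \<Rightarrow> (nat \<Rightarrow> 'a measure) \<Rightarrow> bool" where
  "filtration M F \<longleftrightarrow> (\<forall>n. subalgebra M (F n)) \<and> (\<forall>n. sets (F n) \<subseteq> sets (F (Suc n)))"

definition martingale_from ::
  "'a measure \<Rightarrow> (nat \<Rightarrow> 'a measure) \<Rightarrow> nat \<Rightarrow> (nat \<Rightarrow> 'a \<Rightarrow> real) \<Rightarrow> bool" where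
  "martingale_from M F k X \<longleftrightarrow>
     (\<forall>n\<ge>k. X n \<in> borel_measurable (F n) \<and> integrable M (X n)) \<and>
     (\<forall>n>k. AE \<omega> in M. real_cond_exp M (F (n - 1)) (X n) \<omega> = X (n - 1) \<omega>)"

end

theory Submission
  imports Defs
begin

lemma Gp1: "z > 0 \<Longrightarrow> Gamma ((z::real) + 1) = z  *  Gamma z"
  by (rule Gamma_plus1) (auto elim!: nonpos_Ints_cases)

lemma Gm1: "z > 1 \<Longrightarrow> Gamma (z::real) = (z - 1)  *  Gamma (z - 1)"
  using Gp1[of "z - 1"] by simp

definition m11 :: "real \<Rightarrow> real \<Rightarrow> real" where "m11 s y = Gamma (y+s)/(Gamma y  *  Gamma (1+s))"
definition m22 :: "real \<Rightarrow> real \<Rightarrow> real" where "m22 s y = (y-1+s) * Gamma (y+2 * s-1)/(s * Gamma y * Gamma (2 * s))"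
definition cc1 :: "real \<Rightarrow> real \<Rightarrow> real" where "cc1 s y = 1 - Gamma (y+1+s)/(Gamma y  *  Gamma (2+s))"
definition cc2 :: "real \<Rightarrow> real \<Rightarrow> real" where "cc2 s y = (2 * y+2 * s-1) * Gamma (y+2 * s)/(s * (1+2 * s) * Gamma y * Gamma (2 * s))
   - 2 * Gamma (y+1+s)/(Gamma y * Gamma (2+s))"
definition a11 :: "real \<Rightarrow> real \<Rightarrow> real" where "a11 s y = (y-1)/(y-1+s)"
definition a21 :: "real \<Rightarrow> real \<Rightarrow> real" where "a21 s y = 2 * s * (y-1)/((y-2+2 * s) * (y-1+s))"
definition a22 :: "real \<Rightarrow> real \<Rightarrow> real" where "a22 s y = (y-1) * (y-2+s)/((y-2+2 * s) * (y-1+s))"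

context fixes s z :: real assumes s0: "0 < s" and s1: "s < 1" and z: "z \<ge> 2"
begin

lemma pos: "Gamma z \<noteq> 0" "Gamma (1+s) \<noteq> 0" "Gamma (2 * s) \<noteq> 0"
  "Gamma (z+s) \<noteq> 0" "Gamma (z+2 * s-1) \<noteq> 0"
  using s0 s1 z by (auto intro!: less_imp_neq[symmetric])

lemma nz: "z \<noteq> 0" "z + s \<noteq> 0" "z + 2 * s - 1 \<noteq> 0" "z + 1 + s \<noteq> 0" "z + 2 * s \<noteq> 0"
  "z - 1 + s \<noteq> 0" "z - 1 + 2 * s \<noteq> 0" "1 + s \<noteq> 0" "1 + 2 * s \<noteq> 0" "s \<noteq> 0"
  "z + 1 - 1 + s \<noteq> 0" "z + 1 - 2 + 2 * s \<noteq> 0" "z + 1 - 1 \<noteq> 0"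
  using s0 s1 z by auto

lemma e1: "Gamma (z + 1) = z * Gamma z" using Gp1[of z] z by simp
lemma e2: "Gamma (z + 1 + s) = (z + s) * Gamma (z + s)"
proof - have h: "z + 1 + s = (z + s) + 1" by simp
  have "Gamma ((z + s) + 1) = (z + s) * Gamma (z + s)" by (rule Gp1) (use s0 z in simp)
  then show ?thesis unfolding h . qed
lemma e3: "Gamma (z + 1 + 1 + s) = (z + 1 + s) * ((z + s) * Gamma (z + s))"
proof - have h: "z + 1 + 1 + s = (z + 1 + s) + 1" by simp
  have "Gamma ((z + 1 + s) + 1) = (z + 1 + s) * Gamma (z + 1 + s)" by (rule Gp1) (use s0 z in simp)
  then show ?thesis unfolding h e2 . qed
lemma e6: "Gamma (z + 2 * s) = (z + 2 * s - 1) * Gamma (z + 2 * s - 1)"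
proof - have h: "z + 2 * s = (z + 2 * s - 1) + 1" by simp
  have "Gamma ((z + 2 * s - 1) + 1) = (z + 2 * s - 1) * Gamma (z + 2 * s - 1)" by (rule Gp1) (use s0 z in simp)
  then show ?thesis by (simp only: h[symmetric]) qed
lemma e4: "Gamma (z + 1 + 2 * s - 1) = (z + 2 * s - 1) * Gamma (z + 2 * s - 1)"
proof - have "z + 1 + 2 * s - 1 = z + 2 * s" by simp
  then show ?thesis using e6 by simp qed
lemma e5: "Gamma (z + 1 + 2 * s) = (z + 2 * s) * ((z + 2 * s - 1) * Gamma (z + 2 * s - 1))"
proof - have h: "z + 1 + 2 * s = (z + 2 * s) + 1" by simp
  have "Gamma ((z + 2 * s) + 1) = (z + 2 * s) * Gamma (z + 2 * s)" by (rule Gp1) (use s0 z in simp)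
  then show ?thesis unfolding h e6 . qed
lemma e7: "Gamma (2 + s) = (1 + s) * Gamma (1 + s)"
proof - have h: "2 + s = (1 + s) + 1" by simp
  have "Gamma ((1 + s) + 1) = (1 + s) * Gamma (1 + s)" by (rule Gp1) (use s0 in simp)
  then show ?thesis unfolding h . qed

lemmas E = e1 e2 e3 e4 e5 e6 e7

lemma i1: "m11 s (z+1) * a11 s (z+1) = m11 s z"
  unfolding m11_def a11_def E using pos nz by (simp add: divide_simps; simp add: algebra_simps)

lemma i2: "m11 s (z+1) + cc1 s (z+1) = cc1 s z"
  unfolding m11_def cc1_def E using pos nz by (simp add: divide_simps; simp add: algebra_simps)

lemma i3: "m22 s (z+1) * a22 s (z+1) = m22 s z"
  unfolding m22_def a22_def E using pos nz by (simp add: divide_simps; simp add: algebra_simps)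

lemma i4: "(2 * m11 s (z+1) - 2 * m22 s (z+1)) * a11 s (z+1) + m22 s (z+1) * a21 s (z+1) = 2 * m11 s z - 2 * m22 s z"
proof -
  have "2 * a11 s (z+1) - a21 s (z+1) = 2 * a22 s (z+1)" unfolding a11_def a21_def a22_def
    using nz by (simp add: divide_simps; simp add: algebra_simps)
  then have A: "a21 s (z+1) = 2 * a11 s (z+1) - 2 * a22 s (z+1)" by simp
  have "(2 * m11 s (z + 1) - 2 * m22 s (z + 1)) * a11 s (z + 1) + m22 s (z + 1) * a21 s (z + 1)
     = 2 * (m11 s (z + 1) * a11 s (z + 1)) - 2 * (m22 s (z + 1) * a22 s (z + 1))"
    unfolding A by (simp add: algebra_simps)
  then show ?thesis using i1 i3 by simp
qed

lemma i5: "(2 * m11 s (z+1) - 2 * m22 s (z+1)) + cc2 s (z+1) = cc2 s z"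
  unfolding m11_def m22_def cc2_def E using pos nz by (simp add: divide_simps; simp add: algebra_simps)
end

lemma coef: "(p::real) / q = p' / q' \<Longrightarrow> p * G / (q * H * K) = p' * G / (q' * H * K)"
proof -
  assume h: "p / q = p' / q'"
  have "p * G / (q * H * K) = (p / q) * (G / (H * K))" by (simp add: mult.assoc)
  also have "\<dots> = (p' / q') * (G / (H * K))" by (simp add: h)
  also have "\<dots> = p' * G / (q' * H * K)" by (simp add: mult.assoc)
  finally show ?thesis .
qed

context fixes m :: nat and r s :: real assumes m: "m \<ge> 2" and r: "r = real m" and s: "s = r / (r + 1)"
begin

lemma r1: "r + 1 \<noteq> 0" "r \<noteq> 0" using m r by auto
lemma mp: "real m > 0" "real m + 1 > 0" "3 * real m + 1 > 0" "1 + real m > 0" "1 + 3 * real m > 0" using m by auto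

lemma B11: "M11 m n = m11 s (real n)"
proof -
  have "(r * real n + r + real n) / (r + 1) = real n + s" "(2 * r + 1) / (r + 1) = 1 + s"
    using r1 s by (auto simp: field_simps)
  thus ?thesis unfolding M11_def m11_def Let_def r[symmetric] by simp
qed

lemma mt: "(t::real) \<noteq> 0 \<Longrightarrow> a / b = (a * t) / (b * t)" by simp

lemma se: "s * (r + 1) = r" unfolding s using r1 by simp
lemma lin: "(y - k + j * s) * (r + 1) = (y - k) * (r + 1) + j * r"
  using se by (simp add: algebra_simps)

lemma B22: "M22 m n = m22 s (real n)"
proof -
  have h: "(r * real n + r + real n - 1) / (r + 1) = real n + 2 * s - 1" "2 * r / (r + 1) = 2 * s"
    using r1 s by (auto simp: field_simps)
  have "(real n - 1 + s) / s = ((real n - 1 + s) * (r + 1)) / (s * (r + 1))" using mt r1 by blast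
  also have "\<dots> = (r * real n + real n - 1) / r" unfolding se using lin[of "real n" 1 1]
    by (simp add: algebra_simps)
  finally have c: "(r * real n + real n - 1) / r = (real n - 1 + s) / s" by simp
  show ?thesis unfolding M22_def m22_def Let_def r[symmetric] h by (rule coef[OF c])
qed

lemma B21: "M21 m n = 2 * m11 s (real n) - 2 * m22 s (real n)"
proof -
  have "M21 m n = 2 * M11 m n - 2 * M22 m n"
    unfolding M21_def M11_def M22_def Let_def by (simp add: mult.assoc)
  thus ?thesis using B11 B22 by simp
qed

lemma Bc1: "c1 m n = cc1 s (real n)"
proof -
  have "(r * real n + 2 * r + real n + 1) / (r + 1) = real n + 1 + s" "(3 * r + 2) / (r + 1) = 2 + s"
    using r1 s by (auto simp: field_simps)
  thus ?thesis unfolding c1_def cc1_def Let_def r[symmetric] by simp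
qed

lemma Bc2: "c2 m n = cc2 s (real n)"
proof -
  have h: "(r * real n + 2 * r + real n + 1) / (r + 1) = real n + 1 + s" "(3 * r + 2) / (r + 1) = 2 + s"
     "(r * real n + 2 * r + real n) / (r + 1) = real n + 2 * s" "2 * r / (r + 1) = 2 * s"
    using r1 s by (auto simp: field_simps)
  have e3: "(2 * real n + 2 * s - 1) * (r + 1) = 2 * r * real n + r + 2 * real n - 1"
    using se by (simp add: algebra_simps)
  have e4: "(1 + 2 * s) * (r + 1) = 3 * r + 1" using se by (simp add: algebra_simps)
  have "(2 * real n + 2 * s - 1) / (s * (1 + 2 * s))
     = ((2 * real n + 2 * s - 1) * (r + 1) * (r + 1)) / ((s * (r + 1)) * ((1 + 2 * s) * (r + 1)))"
  proof -
    have D: "(s * (1 + 2 * s)) * (r + 1) * (r + 1) = (s * (r + 1)) * ((1 + 2 * s) * (r + 1))" by (simp only: ac_simps)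
    show ?thesis unfolding D[symmetric] using mt[OF r1(1)] by metis
  qed
  also have "\<dots> = (r + 1) * (2 * r * real n + r + 2 * real n - 1) / (r * (3 * r + 1))"
    unfolding se e4 e3 by (simp add: algebra_simps)
  finally have c: "(r + 1) * (2 * r * real n + r + 2 * real n - 1) / (r * (3 * r + 1)) = (2 * real n + 2 * s - 1) / (s * (1 + 2 * s))" by simp
  show ?thesis unfolding c2_def cc2_def Let_def r[symmetric] h using coef[OF c] by simp
qed

lemma BA: "A11 m n = a11 s (real n)" "A21 m n = a21 s (real n)" "A22 m n = a22 s (real n)"
proof -
  have f1: "(real n - 1 + s) * (r + 1) = r * real n + real n - 1" using se by (simp add: algebra_simps)
  have f2: "(real n - 2 + 2 * s) * (r + 1) = r * real n + real n - 2" using se by (simp add: algebra_simps)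
  have f3: "(real n - 2 + s) * (r + 1) = r * real n - r + real n - 2" using se by (simp add: algebra_simps)
  have "a11 s (real n) = ((real n - 1) * (r + 1)) / ((real n - 1 + s) * (r + 1))"
    unfolding a11_def using mt r1 by blast
  also have "\<dots> = A11 m n" unfolding f1 A11_def Let_def r[symmetric] by (simp add: algebra_simps)
  finally show "A11 m n = a11 s (real n)" by simp
  have "a21 s (real n) = (2 * (s * (r + 1)) * (real n - 1) * (r + 1)) / (((real n - 2 + 2 * s) * (r + 1)) * ((real n - 1 + s) * (r + 1)))"
  proof -
    have D: "((real n - 2 + 2 * s) * (real n - 1 + s)) * (r + 1) * (r + 1) = ((real n - 2 + 2 * s) * (r + 1)) * ((real n - 1 + s) * (r + 1))" by (simp only: ac_simps)
    have N: "2 * s * (real n - 1) * (r + 1) * (r + 1) = 2 * (s * (r + 1)) * (real n - 1) * (r + 1)" by (simp only: ac_simps)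
    show ?thesis unfolding D[symmetric] N[symmetric] a21_def using mt[OF r1(1)] by metis
  qed
  also have "\<dots> = A21 m n" unfolding f1 f2 se A21_def Let_def r[symmetric] by (simp add: algebra_simps)
  finally show "A21 m n = a21 s (real n)" by simp
  have "a22 s (real n) = ((real n - 1) * (r + 1) * ((real n - 2 + s) * (r + 1))) / (((real n - 2 + 2 * s) * (r + 1)) * ((real n - 1 + s) * (r + 1)))"
  proof -
    have D: "((real n - 2 + 2 * s) * (real n - 1 + s)) * (r + 1) * (r + 1) = ((real n - 2 + 2 * s) * (r + 1)) * ((real n - 1 + s) * (r + 1))" by (simp only: ac_simps)
    have N: "(real n - 1) * (real n - 2 + s) * (r + 1) * (r + 1) = (real n - 1) * (r + 1) * ((real n - 2 + s) * (r + 1))" by (simp only: ac_simps)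
    show ?thesis unfolding D[symmetric] N[symmetric] a22_def using mt[OF r1(1)] by metis
  qed
  also have "\<dots> = A22 m n" unfolding f1 f2 f3 A22_def Let_def r[symmetric] by (simp add: algebra_simps)
  finally show "A22 m n = a22 s (real n)" by simp
qed
end

lemma sfs: assumes "prob_space M" "subalgebra M G" shows "sigma_finite_subalgebra M G"
proof -
  interpret prob_space M by fact
  have "finite_measure_subalgebra M G" by unfold_locales (fact assms(2))
  thus ?thesis by (rule finite_measure_subalgebra_is_sigma_finite)
qed

lemma ce1:
  assumes P: "prob_space M" and S: "subalgebra M G" and X: "integrable M X"
    and eX: "AE \<omega> in M. real_cond_exp M G X \<omega> = u \<omega>"
  shows "AE \<omega> in M. real_cond_exp M G (\<lambda>\<omega>. a * X \<omega> + c) \<omega> = a * u \<omega> + c"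
proof -
  interpret prob_space M by fact
  interpret sigma_finite_subalgebra M G using sfs[OF P S] .
  have ic: "integrable M (\<lambda>_. c)" by simp
  have iaX: "integrable M (\<lambda>\<omega>. a * X \<omega>)" using X by simp
  have h1: "AE \<omega> in M. real_cond_exp M G (\<lambda>\<omega>. a * X \<omega> + c) \<omega> = real_cond_exp M G (\<lambda>\<omega>. a * X \<omega>) \<omega> + real_cond_exp M G (\<lambda>_. c) \<omega>"
    by (rule real_cond_exp_add[OF iaX ic])
  have h2: "AE \<omega> in M. real_cond_exp M G (\<lambda>\<omega>. a * X \<omega>) \<omega> = a * real_cond_exp M G X \<omega>"
    by (rule real_cond_exp_cmult[OF X])
  have h3: "AE \<omega> in M. real_cond_exp M G (\<lambda>_. c) \<omega> = c"
    by (rule real_cond_exp_F_meas[OF ic]) simp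
  show ?thesis using h1 h2 h3 eX by eventually_elim simp
qed

lemma ce2:
  assumes P: "prob_space M" and S: "subalgebra M G" and X: "integrable M X" and Y: "integrable M Y"
    and eX: "AE \<omega> in M. real_cond_exp M G X \<omega> = u \<omega>"
    and eY: "AE \<omega> in M. real_cond_exp M G Y \<omega> = v \<omega>"
  shows "AE \<omega> in M. real_cond_exp M G (\<lambda>\<omega>. a * X \<omega> + b * Y \<omega> + c) \<omega> = a * u \<omega> + b * v \<omega> + c"
proof -
  interpret prob_space M by fact
  interpret sigma_finite_subalgebra M G using sfs[OF P S] .
  have ic: "integrable M (\<lambda>_. c)" by simp
  have iaX: "integrable M (\<lambda>\<omega>. a * X \<omega>)" using X by simp
  have ibY: "integrable M (\<lambda>\<omega>. b * Y \<omega>)" using Y by simp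
  have iXY: "integrable M (\<lambda>\<omega>. a * X \<omega> + b * Y \<omega>)" using iaX ibY by simp
  have h1: "AE \<omega> in M. real_cond_exp M G (\<lambda>\<omega>. a * X \<omega> + b * Y \<omega> + c) \<omega> = real_cond_exp M G (\<lambda>\<omega>. a * X \<omega> + b * Y \<omega>) \<omega> + real_cond_exp M G (\<lambda>_. c) \<omega>"
    by (rule real_cond_exp_add[OF iXY ic])
  have h1b: "AE \<omega> in M. real_cond_exp M G (\<lambda>\<omega>. a * X \<omega> + b * Y \<omega>) \<omega> = real_cond_exp M G (\<lambda>\<omega>. a * X \<omega>) \<omega> + real_cond_exp M G (\<lambda>\<omega>. b * Y \<omega>) \<omega>"
    by (rule real_cond_exp_add[OF iaX ibY])
  have h2: "AE \<omega> in M. real_cond_exp M G (\<lambda>\<omega>. a * X \<omega>) \<omega> = a * real_cond_exp M G X \<omega>"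
    by (rule real_cond_exp_cmult[OF X])
  have h2b: "AE \<omega> in M. real_cond_exp M G (\<lambda>\<omega>. b * Y \<omega>) \<omega> = b * real_cond_exp M G Y \<omega>"
    by (rule real_cond_exp_cmult[OF Y])
  have h3: "AE \<omega> in M. real_cond_exp M G (\<lambda>_. c) \<omega> = c"
    by (rule real_cond_exp_F_meas[OF ic]) simp
  show ?thesis using h1 h1b h2 h2b h3 eX eY by eventually_elim simp
qed

lemma det:
  assumes m: "m \<ge> 2" and n: "n \<ge> 3"
  shows "M11 m n * A11 m n = M11 m (n - 1)" "M11 m n + c1 m n = c1 m (n - 1)"
    "M22 m n * A22 m n = M22 m (n - 1)"
    "M21 m n * A11 m n + M22 m n * A21 m n = M21 m (n - 1)"
    "M21 m n + c2 m n = c2 m (n - 1)"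
proof -
  define r where "r = real m"
  define s where "s = r / (r + 1)"
  define z where "z = real n - 1"
  have s0: "0 < s" "s < 1" using m unfolding s_def r_def by (auto simp: field_simps)
  have z: "z \<ge> 2" using n unfolding z_def by simp
  have rn: "real n = z + 1" "real (n - 1) = z" using n unfolding z_def by auto
  note Bs = B11[OF m r_def s_def] B22[OF m r_def s_def] B21[OF m r_def s_def] Bc1[OF m r_def s_def]
    Bc2[OF m r_def s_def] BA[OF m r_def s_def]
  show "M11 m n * A11 m n = M11 m (n - 1)" unfolding Bs rn using i1[OF s0 z] .
  show "M11 m n + c1 m n = c1 m (n - 1)" unfolding Bs rn using i2[OF s0 z] .
  show "M22 m n * A22 m n = M22 m (n - 1)" unfolding Bs rn using i3[OF s0 z] .
  show "M21 m n * A11 m n + M22 m n * A21 m n = M21 m (n - 1)" unfolding Bs rn using i4[OF s0 z] .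
  show "M21 m n + c2 m n = c2 m (n - 1)" unfolding Bs rn using i5[OF s0 z] .
qed

theorem lemma1:
  fixes M :: "'a measure" and F :: "nat \<Rightarrow> 'a measure"
    and W B :: "nat \<Rightarrow> 'a \<Rightarrow> real" and m :: nat
  assumes "m \<ge> 2"
    and "prob_space M"
    and "filtration M F"
    and "\<And>n. W n \<in> borel_measurable (F n)" and "\<And>n. B n \<in> borel_measurable (F n)"
    and "\<And>n. integrable M (W n)" and "\<And>n. integrable M (B n)"
    and "\<And>n. n \<ge> 1 \<Longrightarrow> AE \<omega> in M.
           real_cond_exp M (F (n - 1)) (W n) \<omega> = A11 m n * W (n - 1) \<omega> + 1"
    and "\<And>n. n \<ge> 1 \<Longrightarrow> AE \<omega> in M.
           real_cond_exp M (F (n - 1)) (B n) \<omega> = A21 m n * W (n - 1) \<omega> + A22 m n * B (n - 1) \<omega>"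
  shows "martingale_from M F 2 (\<lambda>n \<omega>. M11 m n * W n \<omega> + c1 m n)
       \<and> martingale_from M F 2 (\<lambda>n \<omega>. M21 m n * W n \<omega> + M22 m n * B n \<omega> + c2 m n)"
proof -
  interpret prob_space M by fact
  note [measurable] = assms(4) assms(5)
  have sub: "subalgebra M (F k)" for k using assms(3) unfolding filtration_def by auto
  have i1: "integrable M (\<lambda>\<omega>. a * W n \<omega> + c)" for a c n using assms(6)[of n] by simp
  have i2: "integrable M (\<lambda>\<omega>. a * W n \<omega> + b * B n \<omega> + c)" for a b c n using assms(6)[of n] assms(7)[of n] by simp
  show ?thesis unfolding martingale_from_def
  proof (intro conjI allI impI)
    fix n :: nat assume n: "2 < n"
    have n1: "n \<ge> 1" "n \<ge> 3" using n by auto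
    note D = det[OF assms(1) n1(2)]
    show "AE \<omega> in M. real_cond_exp M (F (n - 1)) (\<lambda>\<omega>. M11 m n * W n \<omega> + c1 m n) \<omega> = M11 m (n - 1) * W (n - 1) \<omega> + c1 m (n - 1)"
      using ce1[OF assms(2) sub assms(6) assms(8)[OF n1(1)], of "M11 m n" "c1 m n"]
    proof eventually_elim
      case (elim \<omega>)
      then show ?case using D(1,2)[symmetric] by (simp add: algebra_simps)
    qed
    show "AE \<omega> in M. real_cond_exp M (F (n - 1)) (\<lambda>\<omega>. M21 m n * W n \<omega> + M22 m n * B n \<omega> + c2 m n) \<omega> = M21 m (n - 1) * W (n - 1) \<omega> + M22 m (n - 1) * B (n - 1) \<omega> + c2 m (n - 1)"
      using ce2[OF assms(2) sub assms(6) assms(7) assms(8)[OF n1(1)] assms(9)[OF n1(1)], of "M21 m n" "M22 m n" "c2 m n"]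
    proof eventually_elim
      case (elim \<omega>)
      then show ?case using D(3,4,5)[symmetric] by (simp add: algebra_simps)
    qed
  qed (use i1 i2 in auto)
qed
end
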